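(* Let $X=[0,1]^d$, let $Y$ be a finite-dimensional normed space, and let $\mathcal{M}\subset X$ be a compact smooth embedded manifold of dimension $m$ with volume measure $dVol$. There exists $r>0$ depending only on $\mathcal{M}$ such that for every Lipschitz $u:X\to Y$ with Lipschitz constant $L$: if $\|u\|_{L^\infty(\mathcal{M},Y)}\le Lr$ then $$\|u\|_{L^\infty(\mathcal{M},Y)}^{m+2}\le\frac{(m+2)(m+1)}{\alpha(m)}L^m\|u\|_{L^2(\mathcal{M},Y)}^2,$$ and if $\|u\|_{L^\infty(\mathcal{M},Y)}\ge Lr$ then $$\|u\|_{L^\infty(\mathcal{M},Y)}^{2}\le\frac{2^{m+1}(m+1)}{\alpha(m)r^m}\|u\|_{L^2(\mathcal{M},Y)}^2,$$ where $\alpha(m)$ is the volume of the unit ball in $\mathbb{R}^m$.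
   Context: $\|u\|_{L^2(\mathcal{M},Y)}^2=\int_{\mathcal{M}}\|u(x)\|_Y^2\,dVol(x)$ and $\|u\|_{L^\infty(\mathcal{M},Y)}=\sup_{x\in\mathcal{M}}\|u(x)\|_Y$. *)

theory Defs
  imports "HOL-Analysis.Analysis"
begin

fun iter_deriv :: "('a::real_normed_vector \<Rightarrow> 'b::real_normed_vector) \<Rightarrow> 'a list \<Rightarrow> 'a \<Rightarrow> 'b" where
  "iter_deriv f [] = f"
| "iter_deriv f (v # vs) = (\<lambda>x. frechet_derivative (iter_deriv f vs) (at x) v)"

definition smooth_on :: "'a::real_normed_vector set \<Rightarrow> ('a \<Rightarrow> 'b::real_normed_vector) \<Rightarrow> bool" where
  "smooth_on V f \<longleftrightarrow> (\<forall>vs. \<forall>x\<in>V. iter_deriv f vs differentiable (at x))"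

definition local_param :: "(real^'n) set \<Rightarrow> (real^'m) set \<Rightarrow> (real^'m \<Rightarrow> real^'n) \<Rightarrow> bool" where
  "local_param M V \<phi> \<longleftrightarrow> open V \<and> smooth_on V \<phi> \<and>
     (\<forall>x\<in>V. inj (frechet_derivative \<phi> (at x))) \<and>
     (\<exists>U \<psi>. open U \<and> homeomorphism V (M \<inter> U) \<phi> \<psi>)"

text \<open>M is a smooth embedded submanifold of R^d of dimension m = CARD('m).\<close>
definition smooth_submanifold :: "(real^'n) set \<Rightarrow> 'm::finite itself \<Rightarrow> bool" where
  "smooth_submanifold M (_::'m itself) \<longleftrightarrow>
     (\<forall>p\<in>M. \<exists>(V::(real^'m) set) \<phi>. local_param M V \<phi> \<and> p \<in> \<phi> ` V)"

definition param_jacobian :: "(real^'m \<Rightarrow> real^'n) \<Rightarrow> real^'m \<Rightarrow> real" where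
  "param_jacobian \<phi> x = sqrt (det (transpose (matrix (frechet_derivative \<phi> (at x))) **
                                    matrix (frechet_derivative \<phi> (at x))))"

text \<open>Vol is the Riemannian volume measure of the m-dimensional submanifold M: a measure on the
  Borel subsets of M which, on every chart domain, is given by the area formula.
  (This characterizes the volume measure uniquely.)\<close>
definition is_volume_measure :: "(real^'n) set \<Rightarrow> 'm::finite itself \<Rightarrow> (real^'n) measure \<Rightarrow> bool" where
  "is_volume_measure M (_::'m itself) Vol \<longleftrightarrow>
     space Vol = M \<and> sets Vol = sets (restrict_space borel M) \<and>
     (\<forall>(V::(real^'m) set) \<phi> A. local_param M V \<phi> \<longrightarrow> A \<in> sets Vol \<longrightarrow> A \<subseteq> \<phi> ` V \<longrightarrow>
        emeasure Vol A = (\<integral>\<^sup>+ x. indicator (V \<inter> \<phi> -` A) x * ennreal (param_jacobian \<phi> x) \<partial>lborel))"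

definition unit_ball_volume :: "'m::finite itself \<Rightarrow> real" where
  "unit_ball_volume (_::'m itself) = measure lborel (ball (0::real^'m) 1)"

end

theory Submission
  imports Defs
begin


lemma poly_int:
  fixes S :: real assumes "0 \<le> S"
  shows "((\<lambda>z. 2 * (S - z) * z ^ m) has_integral (2*S^(m+2)/((real m+1)*(real m+2)))) {0..S}"
proof -
  have n1: "real m + 1 \<noteq> 0" "real m + 2 \<noteq> 0" by linarith+
  define F where "F z = (2*S/(real m+1))*z^(m+1) - (2/(real m+2))*z^(m+2)" for z :: real
  have "((\<lambda>z. 2 * (S - z) * z ^ m) has_integral (F S - F 0)) {0..S}"
  proof (rule fundamental_theorem_of_calculus)
    fix x :: real assume "x \<in> {0..S}"
    have d1: "((\<lambda>z. z^(m+1)) has_real_derivative (real m+1)*x^m) (at x within {0..S})"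
      using DERIV_pow[of "m+1" x "{0..S}"] by (simp add: add.commute)
    have d2: "((\<lambda>z. z^(m+2)) has_real_derivative (real m+2)*x^(m+1)) (at x within {0..S})"
      using DERIV_pow[of "m+2" x "{0..S}"] by (simp add: numeral_2_eq_2 add.commute)
    have "(F has_real_derivative
       (2*S/(real m+1))*((real m+1)*x^m) - (2/(real m+2))*((real m+2)*x^(m+1))) (at x within {0..S})"
      unfolding F_def by (intro DERIV_diff DERIV_cmult d1 d2)
    moreover have a: "(2*S/(real m+1))*((real m+1)*x^m) = 2*S*x^m"
      using n1 by simp
    moreover have b: "(2/(real m+2))*((real m+2)*x^(m+1)) = 2*x*x^m"
      using n1 by simp
    ultimately have "(F has_real_derivative 2 * (S - x) * x ^ m) (at x within {0..S})"
      by (simp add: algebra_simps)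
    then show "(F has_vector_derivative 2 * (S - x) * x ^ m) (at x within {0..S})"
      by (simp add: has_real_derivative_iff_has_vector_derivative)
  qed (use assms in auto)
  moreover have "F S - F 0 = 2*S^(m+2)/((real m+1)*(real m+2))"
  proof -
    have "F S = 2*S^(m+2)*(1/(real m+1) - 1/(real m+2))"
      unfolding F_def by (simp add: algebra_simps power_Suc)
    also have "\<dots> = 2*S^(m+2)/((real m+1)*(real m+2))"
      using n1 by (simp add: field_simps)
    finally show ?thesis by (simp add: F_def)
  qed
  ultimately show ?thesis by simp
qed

lemma lin_int:
  fixes S c :: real assumes "c \<le> S"
  shows "((\<lambda>z. 2*(S-z)) has_integral (S-c)^2) {c..S}"
proof -
  define F where "F z = -((S-z)^2)" for z :: real
  have "((\<lambda>z. 2*(S-z)) has_integral (F S - F c)) {c..S}"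
  proof (rule fundamental_theorem_of_calculus)
    fix x :: real assume "x \<in> {c..S}"
    have "(F has_real_derivative 2*(S-x)) (at x within {c..S})"
      unfolding F_def by (auto intro!: derivative_eq_intros simp: algebra_simps)
    then show "(F has_vector_derivative 2*(S-x)) (at x within {c..S})"
      by (simp add: has_real_derivative_iff_has_vector_derivative)
  qed (use assms in auto)
  then show ?thesis by (simp add: F_def)
qed

lemma stepA:
  fixes Vol :: "'a::metric_space measure" and u :: "'a \<Rightarrow> 'y::real_normed_vector" and m :: nat
  assumes fin: "finite_measure Vol" and sp: "space Vol = M" and sets: "sets Vol = sets (restrict_space borel M)"
    and cpt: "compact M" and ne: "M \<noteq> {}" and c: "0 < c" and m: "0 < m"
    and G: "\<And>x \<rho>. x \<in> M \<Longrightarrow> 0 < \<rho> \<Longrightarrow> \<rho> \<le> r \<Longrightarrow> ennreal (c * \<rho> ^ m) \<le> emeasure Vol (M \<inter> cball x \<rho>)"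
    and lip: "L-lipschitz_on M u" and Spos: "0 < (SUP x\<in>M. norm (u x))" and SLr: "(SUP x\<in>M. norm (u x)) \<le> L * r"
  shows "(SUP x\<in>M. norm (u x)) ^ (m+2) \<le> real((m+2)*(m+1)) / (2*c) * L ^ m * (\<integral>x. (norm (u x))\<^sup>2 \<partial>Vol)"
proof -
  interpret V: finite_measure Vol by fact
  define S where "S = (SUP x\<in>M. norm (u x))"
  have L0: "0 \<le> L" using lip by (rule lipschitz_on_nonneg)
  have Lpos: "0 < L"
  proof (rule ccontr)
    assume "\<not> 0 < L" then have "L = 0" using L0 by simp
    then show False using Spos SLr by simp
  qed
  have contu: "continuous_on M u" using lip by (rule lipschitz_on_continuous_on)
  obtain x0 where x0: "x0 \<in> M" "\<And>x. x \<in> M \<Longrightarrow> norm (u x) \<le> norm (u x0)"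
    using continuous_attains_sup[OF cpt ne continuous_on_norm[OF contu]] by blast
  have bdd: "bdd_above ((\<lambda>x. norm (u x)) ` M)" using x0(2) by (meson bdd_aboveI2)
  have "S \<le> norm (u x0)" unfolding S_def using x0 ne by (intro cSUP_least) auto
  moreover have "norm (u x0) \<le> S" unfolding S_def using x0 bdd by (intro cSUP_upper) auto
  ultimately have Seq: "S = norm (u x0)" by simp
  have Sp: "0 < S" using Spos S_def by simp
  have SLr': "S / L \<le> r" using SLr Lpos S_def by (simp add: divide_simps mult.commute)
  have low: "S - L * dist y x0 \<le> norm (u y)" if y: "y \<in> M" for y
  proof -
    have "dist (u y) (u x0) \<le> L * dist y x0" using lipschitz_onD[OF lip y x0(1)] .
    moreover have "norm (u x0) - norm (u y) \<le> dist (u y) (u x0)"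
      by (metis dist_commute dist_norm norm_triangle_ineq2)
    ultimately show ?thesis using Seq by linarith
  qed
  have Sup: "norm (u y) \<le> S" if "y \<in> M" for y using x0 that Seq by simp
  define d where "d y = dist y x0" for y
  define g where "g y = (max 0 (S - L * d y))\<^sup>2" for y
  have measR: "f \<in> borel_measurable Vol" if "continuous_on M f" for f :: "'a \<Rightarrow> real"
    using borel_measurable_continuous_on_restrict[OF that] measurable_cong_sets[OF sets refl] by blast
  have dmeas[measurable]: "d \<in> borel_measurable Vol"
    unfolding d_def by (intro measR continuous_intros)
  have gmeas: "g \<in> borel_measurable Vol"
    unfolding g_def d_def by (intro measR continuous_intros)
  have umeas: "(\<lambda>x. (norm (u x))\<^sup>2) \<in> borel_measurable Vol"
    by (intro measR continuous_intros contu)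
  have gle: "g y \<le> (norm (u y))\<^sup>2" if "y \<in> M" for y
    unfolding g_def d_def using low[OF that] by (intro power_mono) auto
  have gS: "g y \<le> S\<^sup>2" for y
    unfolding g_def d_def using Sp L0 by (intro power_mono) auto
  have gint: "integrable Vol g"
    by (rule V.integrable_const_bound[where B="S\<^sup>2"]) (use gS gmeas in \<open>auto simp: g_def\<close>)
  have uint: "integrable Vol (\<lambda>x. (norm (u x))\<^sup>2)"
    by (rule V.integrable_const_bound[where B="S\<^sup>2"])
       (use Sup umeas sp in \<open>auto intro!: power_mono\<close>)
  define K where "K = (c / L^m) * (2*S^(m+2)/((real m+1)*(real m+2)))"
  have K0: "0 \<le> K" unfolding K_def using c Lpos Sp by auto
  have key: "ennreal K \<le> (\<integral>\<^sup>+ y. g y \<partial>Vol)"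
  proof -
    have PS: "pair_sigma_finite Vol lborel"
      by (simp add: pair_sigma_finite_def V.sigma_finite_measure_axioms sigma_finite_lborel)
    interpret P: pair_sigma_finite Vol lborel by (rule PS)
    define h where "h y z = ennreal (if L * d y \<le> z \<and> z \<le> S then 2*(S - z) else 0)" for y z
    have hmeas: "case_prod h \<in> borel_measurable (Vol \<Otimes>\<^sub>M lborel)"
      unfolding h_def by measurable
    have inner1: "(\<integral>\<^sup>+ z. h y z \<partial>lborel) = ennreal (g y)" for y
    proof (cases "L * d y \<le> S")
      case True
      have "(\<integral>\<^sup>+ z. h y z \<partial>lborel) = (\<integral>\<^sup>+ z. ennreal (indicator {L * d y..S} z * (2*(S-z))) \<partial>lborel)"
        unfolding h_def by (intro nn_integral_cong) (auto simp: indicator_def)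
      also have "\<dots> = ennreal ((S - L * d y)^2)"
        by (rule nn_integral_has_integral_lebesgue) (use True lin_int in auto)
      finally show ?thesis using True unfolding g_def by simp
    next
      case False
      have "h y z = 0" for z using False unfolding h_def by auto
      then show ?thesis using False unfolding g_def by simp
    qed
    have inner2: "ennreal (indicator {0..S} z * ((c/L^m) * (2 * (S - z) * z ^ m))) \<le> (\<integral>\<^sup>+ y. h y z \<partial>Vol)" for z
    proof (cases "0 < z \<and> z \<le> S")
      case True
      have Cset: "M \<inter> cball x0 (z/L) \<in> sets Vol"
      proof -
        have "closed M" using cpt by (rule compact_imp_closed)
        then show ?thesis unfolding sets
          by (subst sets_restrict_space_iff) auto
      qed
      have "(\<integral>\<^sup>+ y. h y z \<partial>Vol) = (\<integral>\<^sup>+ y. ennreal (2*(S-z)) * indicator (M \<inter> cball x0 (z/L)) y \<partial>Vol)"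
      proof (intro nn_integral_cong)
        fix y assume "y \<in> space Vol"
        then have y: "y \<in> M" using sp by simp
        have "L * d y \<le> z \<longleftrightarrow> dist x0 y \<le> z / L"
          using Lpos by (simp add: d_def dist_commute field_simps)
        then show "h y z = ennreal (2*(S-z)) * indicator (M \<inter> cball x0 (z/L)) y"
          unfolding h_def using True y by (auto simp: indicator_def)
      qed
      also have "\<dots> = ennreal (2*(S-z)) * emeasure Vol (M \<inter> cball x0 (z/L))"
        by (rule nn_integral_cmult_indicator[OF Cset])
      also have "\<dots> \<ge> ennreal (2*(S-z)) * ennreal (c * (z/L)^m)"
        using G[OF x0(1), of "z/L"] True Lpos SLr' by (intro mult_left_mono) (auto simp: divide_simps)
      finally have "ennreal (2*(S-z)) * ennreal (c * (z/L)^m) \<le> (\<integral>\<^sup>+ y. h y z \<partial>Vol)" .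
      moreover have "ennreal (2*(S-z)) * ennreal (c * (z/L)^m) = ennreal (indicator {0..S} z * ((c/L^m) * (2 * (S - z) * z ^ m)))"
        using True c Lpos by (subst ennreal_mult[symmetric]) (auto simp: power_divide)
      ultimately show ?thesis by simp
    next
      case False
      then have "indicator {0..S} z * ((c/L^m) * (2 * (S - z) * z ^ m)) = (0::real)"
        using m by (auto simp: indicator_def)
      then show ?thesis by (metis ennreal_0 zero_le)
    qed
    have "(\<integral>\<^sup>+ y. g y \<partial>Vol) = (\<integral>\<^sup>+ y. (\<integral>\<^sup>+ z. h y z \<partial>lborel) \<partial>Vol)"
      by (simp add: inner1)
    also have "\<dots> = (\<integral>\<^sup>+ z. (\<integral>\<^sup>+ y. h y z \<partial>Vol) \<partial>lborel)"
      by (rule P.Fubini'[OF hmeas, symmetric])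
    also have "\<dots> \<ge> (\<integral>\<^sup>+ z. ennreal (indicator {0..S} z * ((c/L^m) * (2 * (S - z) * z ^ m))) \<partial>lborel)"
      by (intro nn_integral_mono inner2)
    also have "(\<integral>\<^sup>+ z. ennreal (indicator {0..S} z * ((c/L^m) * (2 * (S - z) * z ^ m))) \<partial>lborel) = ennreal K"
    proof -
      have pi: "((\<lambda>z. (c/L^m) * (2 * (S - z) * z ^ m)) has_integral K) {0..S}"
        unfolding K_def by (rule has_integral_mult_right[OF poly_int]) (use Sp in simp)
      show ?thesis
        by (rule nn_integral_has_integral_lebesgue[OF _ pi]) (use c Lpos in auto)
    qed
    finally show ?thesis .
  qed
  have "(\<integral>\<^sup>+ y. g y \<partial>Vol) = ennreal (\<integral>y. g y \<partial>Vol)"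
    by (rule nn_integral_eq_integral[OF gint]) (auto simp: g_def)
  with key have K1: "K \<le> (\<integral>y. g y \<partial>Vol)"
    using K0 by (simp add: ennreal_le_iff integral_nonneg_AE g_def)
  have K2: "(\<integral>y. g y \<partial>Vol) \<le> (\<integral>x. (norm (u x))\<^sup>2 \<partial>Vol)"
    by (rule integral_mono[OF gint uint]) (use gle sp in auto)
  have n1: "real m + 1 \<noteq> 0" "real m + 2 \<noteq> 0" by linarith+
  define P where "P = (real m+1)*(real m+2)"
  have P0: "P \<noteq> 0" using n1 by (simp add: P_def)
  have Preal: "real((m+2)*(m+1)) = P" by (simp add: P_def algebra_simps)
  have Keq: "K = c/L^m*(2*S^(m+2)/P)" by (simp add: K_def P_def)
  have "S ^ (m+2) = real((m+2)*(m+1)) / (2*c) * L ^ m * K"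
    unfolding Keq Preal using c Lpos P0 by (simp add: field_simps)
  also have "\<dots> \<le> real((m+2)*(m+1)) / (2*c) * L ^ m * (\<integral>x. (norm (u x))\<^sup>2 \<partial>Vol)"
    using K1 K2 c Lpos by (intro mult_left_mono) auto
  finally show ?thesis unfolding S_def .
qed



lemma iter_deriv_affine:
  fixes f :: "real^'m \<Rightarrow> 'b::real_normed_vector" and G :: "real^'m \<Rightarrow> real^'m"
  assumes G: "linear G" and sm: "smooth_on V f" and oV: "open V"
  shows "\<forall>z. c0 + G z \<in> V \<longrightarrow> iter_deriv (\<lambda>z. f (c0 + G z)) vs z = iter_deriv f (map G vs) (c0 + G z)"
proof (induction vs)
  case Nil
  then show ?case by simp
next
  case (Cons v vs)
  show ?case
  proof (intro allI impI)
    fix z assume z: "c0 + G z \<in> V"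
    define F where "F = iter_deriv (\<lambda>z. f (c0 + G z)) vs"
    define Fd where "Fd = iter_deriv f (map G vs)"
    define D where "D = frechet_derivative Fd (at (c0 + G z))"
    have "Fd differentiable (at (c0 + G z))" using sm z unfolding smooth_on_def Fd_def by blast
    then have dFd: "(Fd has_derivative D) (at (c0 + G z))"
      unfolding D_def by (simp add: frechet_derivative_works)
    have da: "((\<lambda>z. c0 + G z) has_derivative G) (at z)"
      using G by (auto intro!: derivative_eq_intros linear_imp_has_derivative)
    have "((Fd \<circ> (\<lambda>z. c0 + G z)) has_derivative (D \<circ> G)) (at z)"
      by (rule diff_chain_at[OF da dFd])
    moreover have "open ((\<lambda>z. c0 + G z) -` V)"
      using oV G by (intro continuous_open_vimage continuous_add continuous_const linear_continuous_at) (simp_all add: linear_conv_bounded_linear)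
    ultimately have "(F has_derivative (D \<circ> G)) (at z)"
      by (rule has_derivative_transform_within_open) (use z Cons.IH in \<open>auto simp: F_def Fd_def\<close>)
    then have "frechet_derivative F (at z) = D \<circ> G"
      by (simp add: frechet_derivative_at[symmetric])
    then show "iter_deriv (\<lambda>z. f (c0 + G z)) (v # vs) z = iter_deriv f (map G (v # vs)) (c0 + G z)"
      by (simp add: F_def D_def Fd_def)
  qed
qed

lemma iter_deriv_affine_diff:
  fixes f :: "real^'m \<Rightarrow> 'b::real_normed_vector" and G :: "real^'m \<Rightarrow> real^'m"
  assumes G: "linear G" and sm: "smooth_on V f" and oV: "open V" and z: "c0 + G z \<in> V"
  shows "iter_deriv (\<lambda>z. f (c0 + G z)) vs differentiable (at z)"
proof -
  define Fd where "Fd = iter_deriv f (map G vs)"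
  have "Fd differentiable (at (c0 + G z))" using sm z unfolding smooth_on_def Fd_def by blast
  then obtain D where dFd: "(Fd has_derivative D) (at (c0 + G z))"
    by (auto simp: differentiable_def)
  have da: "((\<lambda>z. c0 + G z) has_derivative G) (at z)"
    using G by (auto intro!: derivative_eq_intros linear_imp_has_derivative)
  have "((Fd \<circ> (\<lambda>z. c0 + G z)) has_derivative (D \<circ> G)) (at z)"
    by (rule diff_chain_at[OF da dFd])
  moreover have "open ((\<lambda>z. c0 + G z) -` V)"
    using oV G by (intro continuous_open_vimage continuous_add continuous_const linear_continuous_at) (simp_all add: linear_conv_bounded_linear)
  ultimately have "(iter_deriv (\<lambda>z. f (c0 + G z)) vs has_derivative (D \<circ> G)) (at z)"
    by (rule has_derivative_transform_within_open)
       (use z iter_deriv_affine[OF G sm oV] in \<open>auto simp: Fd_def\<close>)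
  then show ?thesis by (auto simp: differentiable_def)
qed



lemma normalize_chart:
  fixes \<phi> :: "real^'m \<Rightarrow> real^'n"
  assumes lp: "local_param M V \<phi>" and v0: "v0 \<in> V"
  shows "\<exists>(V'::(real^'m) set) \<psi>. local_param M V' \<psi> \<and> 0 \<in> V' \<and> \<psi> 0 = \<phi> v0 \<and> (\<forall>h. norm (frechet_derivative \<psi> (at 0) h) = norm h)"
proof -
  from lp have oV: "open V" and sm: "smooth_on V \<phi>" and injD: "\<forall>x\<in>V. inj (frechet_derivative \<phi> (at x))"
    and hom0: "\<exists>U \<psi>0. open U \<and> homeomorphism V (M \<inter> U) \<phi> \<psi>0" unfolding local_param_def by auto
  obtain U \<psi>0 where oU: "open U" and hom: "homeomorphism V (M \<inter> U) \<phi> \<psi>0" using hom0 by blast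
  define A where "A = frechet_derivative \<phi> (at v0)"
  have "\<phi> differentiable (at v0)" using sm v0 unfolding smooth_on_def by (metis iter_deriv.simps(1))
  then have dA: "(\<phi> has_derivative A) (at v0)" unfolding A_def by (simp add: frechet_derivative_works)
  have linA: "linear A" using has_derivative_linear[OF dA] .
  have injA: "inj A" using injD v0 A_def by simp
  have dimeq: "dim (range A) = dim (UNIV :: (real^'m) set)"
    using dim_image_eq[OF linA, of UNIV] injA by (simp add: inj_on_subset)
  have subA: "subspace (range A)"
    using linA by (metis subspace_UNIV linear_subspace_image)
  obtain f :: "real^'m \<Rightarrow> real^'n" where lf: "linear f" and fim: "f ` UNIV = range A"
      and fn0: "\<And>x. x \<in> UNIV \<Longrightarrow> norm (f x) = norm x"
    apply (rule isometries_subspaces[OF subspace_UNIV subA dimeq[symmetric]])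
    apply (rule that)
      apply assumption+
    done
  have fn: "norm (f x) = norm x" for x using fn0 by simp
  obtain Ai where lAi: "linear Ai" and AiA: "Ai \<circ> A = id"
    using linear_injective_left_inverse[OF linA injA] by blast
  define G where "G = Ai \<circ> f"
  have linG: "linear G" unfolding G_def by (rule linear_compose[OF lf lAi])
  have AG: "A (G z) = f z" for z
  proof -
    obtain x where x: "f z = A x" using fim by (metis rangeI rangeE)
    have "G z = x" unfolding G_def using x AiA by (metis comp_apply id_apply)
    then show ?thesis using x by simp
  qed
  have nG: "norm (A (G z)) = norm z" for z using AG fn by simp
  have injG: "inj G"
  proof (rule injI)
    fix x y assume "G x = G y"
    then have "f x = f y" using AG by metis
    then have "norm (f (x - y)) = 0" using linear_diff[OF lf] by simp
    then show "x = y" using fn by simp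
  qed
  obtain H where lH: "linear H" and HG: "\<forall>x. H (G x) = x" and GH: "\<forall>x. G (H x) = x"
    using linear_injective_isomorphism[OF linG injG] by auto
  define a where "a z = v0 + G z" for z
  define a' where "a' v = H (v - v0)" for v
  define \<psi> where "\<psi> = \<phi> \<circ> a"
  define V' where "V' = a -` V"
  have cG: "continuous_on X G" for X using linG by (simp add: linear_continuous_on linear_conv_bounded_linear)
  have cH: "continuous_on X H" for X using lH by (simp add: linear_continuous_on linear_conv_bounded_linear)
  have oV': "open V'"
    unfolding V'_def a_def
    using oV linG by (intro continuous_open_vimage continuous_add continuous_const linear_continuous_at) (simp_all add: linear_conv_bounded_linear)
  have ha: "homeomorphism V' V a a'"
    unfolding homeomorphism_def
  proof (intro conjI ballI)
    show "a ` V' = V"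
    proof
      show "a ` V' \<subseteq> V" unfolding V'_def by auto
      show "V \<subseteq> a ` V'"
      proof
        fix v assume "v \<in> V"
        moreover have "a (a' v) = v" unfolding a_def a'_def using GH by simp
        ultimately show "v \<in> a ` V'" unfolding V'_def by (metis imageI vimageI)
      qed
    qed
    show "a' ` V = V'"
    proof
      show "a' ` V \<subseteq> V'"
        unfolding V'_def a_def a'_def using GH by auto
      show "V' \<subseteq> a' ` V"
      proof
        fix x assume "x \<in> V'"
        then have "a x \<in> V" "a' (a x) = x" unfolding V'_def a_def a'_def using HG by auto
        then show "x \<in> a' ` V" by (metis imageI)
      qed
    qed
    show "continuous_on V' a" unfolding a_def by (intro continuous_intros cG)
    show "continuous_on V a'" unfolding a'_def
      by (rule continuous_on_compose2[OF cH[of UNIV]]) (auto intro!: continuous_intros)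
  qed (auto simp: a_def a'_def HG GH)
  have hom': "homeomorphism V' (M \<inter> U) \<psi> (a' \<circ> \<psi>0)"
    unfolding \<psi>_def by (rule homeomorphism_compose[OF ha hom])
  have idf: "iter_deriv (\<lambda>z. \<phi> (v0 + G z)) vs z = iter_deriv \<phi> (map G vs) (v0 + G z)"
    if "z \<in> V'" for vs z
    using iter_deriv_affine[OF linG sm oV, of v0 vs] that unfolding V'_def a_def by auto
  have \<psi>eq: "\<psi> = (\<lambda>z. \<phi> (v0 + G z))" unfolding \<psi>_def a_def by (simp add: o_def)
  have Dpsi: "frechet_derivative \<psi> (at z) = (\<lambda>h. frechet_derivative \<phi> (at (v0 + G z)) (G h))"
    if "z \<in> V'" for z
  proof
    fix h show "frechet_derivative \<psi> (at z) h = frechet_derivative \<phi> (at (v0 + G z)) (G h)"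
      using idf[OF that, of "[h]"] unfolding \<psi>eq by simp
  qed
  have sm': "smooth_on V' \<psi>"
    unfolding smooth_on_def \<psi>eq
    using iter_deriv_affine_diff[OF linG sm oV] unfolding V'_def a_def by auto
  have inj': "\<forall>x\<in>V'. inj (frechet_derivative \<psi> (at x))"
  proof
    fix x assume x: "x \<in> V'"
    then have "v0 + G x \<in> V" unfolding V'_def a_def by simp
    then have "inj (frechet_derivative \<phi> (at (v0 + G x)))" using injD by blast
    then show "inj (frechet_derivative \<psi> (at x))"
      unfolding Dpsi[OF x] using injG by (metis (no_types, lifting) inj_def)
  qed
  have 0: "0 \<in> V'" unfolding V'_def a_def using v0 linear_0[OF linG] by simp
  have lp': "local_param M V' \<psi>"
    unfolding local_param_def using oV' sm' inj' oU hom' by blast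
  have "\<psi> 0 = \<phi> v0" unfolding \<psi>eq using linear_0[OF linG] by simp
  moreover have "norm (frechet_derivative \<psi> (at 0) h) = norm h" for h
    using Dpsi[OF 0] linear_0[OF linG] nG A_def by simp
  ultimately show ?thesis using lp' 0 by (intro exI[of _ V'] exI[of _ \<psi>]) auto
qed



lemma chart_image:
  fixes \<psi> :: "real^'m \<Rightarrow> real^'n"
  assumes lp: "local_param M V \<psi>" and oB: "open B" and BV: "B \<subseteq> V"
  shows "\<exists>W. open W \<and> \<psi> ` B = M \<inter> W"
proof -
  obtain U \<psi>0 where oU: "open U" and hom: "homeomorphism V (M \<inter> U) \<psi> \<psi>0"
    using lp unfolding local_param_def by blast
  have "openin (top_of_set V) B" unfolding openin_open using oB BV by blast
  then have "openin (top_of_set (M \<inter> U)) (\<psi> ` B)" by (rule homeomorphism_imp_open_map[OF hom])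
  then obtain T where oT: "open T" and eq: "\<psi> ` B = M \<inter> U \<inter> T" unfolding openin_open by blast
  show ?thesis using oT oU eq by (intro exI[of _ "U \<inter> T"]) auto
qed

lemma sets_Vol_open:
  assumes Vol: "is_volume_measure M TYPE('m::finite) Vol" and oW: "open W"
  shows "M \<inter> W \<in> sets Vol"
proof -
  have "sets Vol = sets (restrict_space borel M)" using Vol unfolding is_volume_measure_def by blast
  then show ?thesis using oW by (auto simp: sets_restrict_space)
qed

lemma sets_Vol_closed:
  assumes Vol: "is_volume_measure M TYPE('m::finite) Vol" and oW: "closed W"
  shows "M \<inter> W \<in> sets Vol"
proof -
  have "sets Vol = sets (restrict_space borel M)" using Vol unfolding is_volume_measure_def by blast
  then show ?thesis using oW by (auto simp: sets_restrict_space)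
qed

lemma chart_measure:
  fixes \<psi> :: "real^'m \<Rightarrow> real^'n"
  assumes Vol: "is_volume_measure M TYPE('m) Vol" and lp: "local_param M V \<psi>" and oB: "open B" and BV: "B \<subseteq> V"
  shows "emeasure Vol (\<psi> ` B) = (\<integral>\<^sup>+ x. indicator B x * ennreal (param_jacobian \<psi> x) \<partial>lborel)"
proof -
  obtain U \<psi>0 where oU: "open U" and hom: "homeomorphism V (M \<inter> U) \<psi> \<psi>0"
    using lp unfolding local_param_def by blast
  obtain W where oW: "open W" and eqW: "\<psi> ` B = M \<inter> W" using chart_image[OF lp oB BV] by blast
  have sets: "\<psi> ` B \<in> sets Vol" unfolding eqW by (rule sets_Vol_open[OF Vol oW])
  have sub: "\<psi> ` B \<subseteq> \<psi> ` V" using BV by auto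
  have pre: "V \<inter> \<psi> -` (\<psi> ` B) = B"
  proof
    show "B \<subseteq> V \<inter> \<psi> -` \<psi> ` B" using BV by auto
    show "V \<inter> \<psi> -` \<psi> ` B \<subseteq> B"
    proof
      fix x assume "x \<in> V \<inter> \<psi> -` \<psi> ` B"
      then obtain b where x: "x \<in> V" and b: "b \<in> B" and eq: "\<psi> x = \<psi> b" by auto
      have "x = \<psi>0 (\<psi> x)" using hom x unfolding homeomorphism_def by auto
      also have "\<dots> = b" using hom b BV eq unfolding homeomorphism_def by auto
      finally show "x \<in> B" using b by simp
    qed
  qed
  have "emeasure Vol (\<psi> ` B) = (\<integral>\<^sup>+ x. indicator (V \<inter> \<psi> -` (\<psi> ` B)) x * ennreal (param_jacobian \<psi> x) \<partial>lborel)"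
    using Vol lp sets sub unfolding is_volume_measure_def by blast
  then show ?thesis unfolding pre .
qed

lemma jac_iso:
  fixes T :: "real^'m \<Rightarrow> real^'n"
  assumes lT: "linear T" and iso: "\<And>h. norm (T h) = norm h"
  shows "det (transpose (matrix T) ** matrix T) = 1"
proof -
  have ip: "inner (T x) (T y) = inner x y" for x y
    using dot_norm[of "T x" "T y"] dot_norm[of x y] linear_add[OF lT, of x y, symmetric] iso by simp
  have "transpose (matrix T) ** matrix T = mat 1"
  proof (simp add: vec_eq_iff, intro allI)
    fix i j
    have "(transpose (matrix T) ** matrix T) $ i $ j = (\<Sum>k\<in>UNIV. T (axis i 1) $ k * T (axis j 1) $ k)"
      by (simp add: matrix_matrix_mult_def transpose_def matrix_def)
    also have "\<dots> = inner (T (axis i 1)) (T (axis j 1))"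
      by (simp add: inner_vec_def)
    also have "\<dots> = inner (axis i (1::real)) (axis j 1)" by (rule ip)
    also have "\<dots> = mat 1 $ i $ j" by (simp add: inner_axis_axis mat_def)
    finally show "(transpose (matrix T) ** matrix T) $ i $ j = mat 1 $ i $ j" .
  qed
  then show ?thesis by simp
qed

lemma isCont_det:
  fixes X :: "'a::t2_space \<Rightarrow> real^'m^'m"
  assumes "\<And>i j. isCont (\<lambda>z. X z $ i $ j) z0"
  shows "isCont (\<lambda>z. det (X z)) z0"
  unfolding det_def by (intro continuous_intros assms)

lemma Dcont:
  fixes \<psi> :: "real^'m \<Rightarrow> real^'n"
  assumes lp: "local_param M V \<psi>" and z0: "z0 \<in> V"
  shows "isCont (\<lambda>z. frechet_derivative \<psi> (at z) h) z0"
proof -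
  have "iter_deriv \<psi> [h] differentiable (at z0)"
    using lp z0 unfolding local_param_def smooth_on_def by blast
  then have "isCont (iter_deriv \<psi> [h]) z0" by (rule differentiable_imp_continuous_within)
  then show ?thesis by simp
qed

lemma jac_cont:
  fixes \<psi> :: "real^'m \<Rightarrow> real^'n"
  assumes lp: "local_param M V \<psi>" and z0: "z0 \<in> V"
  shows "isCont (param_jacobian \<psi>) z0"
proof -
  have c: "isCont (\<lambda>z. frechet_derivative \<psi> (at z) h $ k) z0" for h k
    using Dcont[OF lp z0, of h] unfolding isCont_def by (rule tendsto_vec_nth)
  have e: "(transpose (matrix (frechet_derivative \<psi> (at z))) ** matrix (frechet_derivative \<psi> (at z))) $ i $ j
     = (\<Sum>k\<in>UNIV. frechet_derivative \<psi> (at z) (axis i 1) $ k * frechet_derivative \<psi> (at z) (axis j 1) $ k)" for z i j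
    by (simp add: matrix_matrix_mult_def transpose_def matrix_def)
  have "isCont (\<lambda>z. det (transpose (matrix (frechet_derivative \<psi> (at z))) ** matrix (frechet_derivative \<psi> (at z)))) z0"
    by (rule isCont_det) (unfold e, intro continuous_intros c)
  then show ?thesis unfolding param_jacobian_def[abs_def] by (intro continuous_intros)
qed



lemma lin_diff_bound:
  fixes A B :: "real^'m \<Rightarrow> real^'n"
  assumes lA: "linear A" and lB: "linear B"
  shows "norm (A h - B h) \<le> (\<Sum>j\<in>UNIV. norm (A (axis j 1) - B (axis j 1))) * norm h"
proof -
  have hexp: "h = (\<Sum>j\<in>UNIV. h$j *\<^sub>R axis j 1)"
    using basis_expansion[of h] by (simp add: scalar_mult_eq_scaleR)
  have "A h - B h = (\<Sum>j\<in>UNIV. h$j *\<^sub>R (A (axis j 1) - B (axis j 1)))"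
    apply (subst (1 2) hexp)
    by (simp add: linear_sum[OF lA] linear_sum[OF lB] linear_cmul[OF lA] linear_cmul[OF lB]
        scaleR_diff_right sum_subtractf)
  also have "norm \<dots> \<le> (\<Sum>j\<in>UNIV. norm (h$j *\<^sub>R (A (axis j 1) - B (axis j 1))))"
    by (rule norm_sum)
  also have "\<dots> \<le> (\<Sum>j\<in>UNIV. norm h * norm (A (axis j 1) - B (axis j 1)))"
    by (intro sum_mono) (simp add: mult_right_mono component_le_norm_cart)
  also have "\<dots> = (\<Sum>j\<in>UNIV. norm (A (axis j 1) - B (axis j 1))) * norm h"
    by (simp add: sum_distrib_left mult.commute)
  finally show ?thesis .
qed

lemma chart_estimate:
  fixes \<psi> :: "real^'m \<Rightarrow> real^'n"
  assumes Vol: "is_volume_measure M TYPE('m) Vol" and lp: "local_param M V \<psi>" and z0: "z0 \<in> V"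
    and iso: "\<And>h. norm (frechet_derivative \<psi> (at z0) h) = norm h"
  shows "\<exists>\<delta>>0. \<exists>W. open W \<and> \<psi> z0 \<in> W \<and> emeasure Vol (M \<inter> W) < \<infinity> \<and>
    (\<forall>x\<in>M \<inter> W. \<forall>\<rho>. 0 < \<rho> \<and> \<rho> \<le> \<delta> \<longrightarrow>
        ennreal (unit_ball_volume TYPE('m) / 2 * \<rho> ^ CARD('m)) \<le> emeasure Vol (M \<inter> cball x \<rho>))"
proof -
  define D where "D z = frechet_derivative \<psi> (at z)" for z
  define J where "J = param_jacobian \<psi>"
  define m where "m = CARD('m)"
  define \<alpha> where "\<alpha> = unit_ball_volume TYPE('m)"
  have m0: "0 < m" unfolding m_def by simp
  have \<alpha>0: "0 < \<alpha>" unfolding \<alpha>_def unit_ball_volume_def using content_ball_pos[of 1 "0::real^'m"] by simp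
  obtain U \<psi>0 where oU: "open U" and hom: "homeomorphism V (M \<inter> U) \<psi> \<psi>0"
    using lp unfolding local_param_def by blast
  have oV: "open V" using lp unfolding local_param_def by blast
  have dif: "(\<psi> has_derivative D z) (at z)" if "z \<in> V" for z
  proof -
    have "iter_deriv \<psi> [] differentiable (at z)" using lp that unfolding local_param_def smooth_on_def by blast
    then show ?thesis unfolding D_def by (simp add: frechet_derivative_works)
  qed
  have lin: "linear (D z)" if "z \<in> V" for z using has_derivative_linear[OF dif[OF that]] .
  have J0: "J z0 = 1"
    using jac_iso[OF lin[OF z0]] iso unfolding J_def param_jacobian_def D_def by simp
  have contJ: "isCont J z0" unfolding J_def by (rule jac_cont[OF lp z0])
  define \<kappa> where "\<kappa> = 1 / (4 * real m)"
  define \<eta> where "\<eta> = \<kappa> / 3"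
  have \<kappa>0: "0 < \<kappa>" "\<kappa> \<le> 1/4" using m0 unfolding \<kappa>_def by (auto simp: field_simps)
  have m\<kappa>: "real m * \<kappa> = 1/4" using m0 unfolding \<kappa>_def by simp
  have \<eta>0: "0 < \<eta>" using \<kappa>0 unfolding \<eta>_def by simp
  have contS: "isCont (\<lambda>z. \<Sum>j\<in>UNIV. norm (D z (axis j 1) - D z0 (axis j 1))) z0"
    unfolding D_def by (intro continuous_intros Dcont[OF lp z0])
  obtain d1 where d1: "d1 > 0" "\<And>z. dist z z0 < d1 \<Longrightarrow>
      dist (\<Sum>j\<in>UNIV. norm (D z (axis j 1) - D z0 (axis j 1))) (\<Sum>j\<in>UNIV. norm (D z0 (axis j 1) - D z0 (axis j 1))) < \<eta>"
    using contS \<eta>0 unfolding continuous_at_eps_delta by blast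
  obtain d2 where d2: "d2 > 0" "\<And>z. dist z z0 < d2 \<Longrightarrow> dist (J z) (J z0) < 1/4"
    using contJ unfolding continuous_at_eps_delta by (meson zero_less_divide_1_iff zero_less_numeral)
  obtain d3 where d3: "d3 > 0" "ball z0 d3 \<subseteq> V"
    using oV z0 by (meson openE)
  define \<delta> where "\<delta> = min d1 (min d2 d3) / 2"
  have \<delta>0: "\<delta> > 0" unfolding \<delta>_def using d1 d2 d3 by simp
  have ball2: "ball z0 (2*\<delta>) \<subseteq> V" using d3 unfolding \<delta>_def by auto
  have Dz: "norm (D z h - D z0 h) \<le> \<eta> * norm h" if z: "z \<in> ball z0 (2*\<delta>)" for z h
  proof -
    have zV: "z \<in> V" using z ball2 by auto
    have "dist z z0 < d1" using z unfolding \<delta>_def by (auto simp: dist_commute)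
    then have "\<bar>\<Sum>j\<in>UNIV. norm (D z (axis j 1) - D z0 (axis j 1))\<bar> < \<eta>"
      using d1(2) by (simp add: dist_real_def)
    then have "(\<Sum>j\<in>UNIV. norm (D z (axis j 1) - D z0 (axis j 1))) < \<eta>"
      by (meson abs_ge_self le_less_trans)
    then have "(\<Sum>j\<in>UNIV. norm (D z (axis j 1) - D z0 (axis j 1))) * norm h \<le> \<eta> * norm h"
      by (intro mult_right_mono) auto
    with lin_diff_bound[OF lin[OF zV] lin[OF z0], of h] show ?thesis by linarith
  qed
  have Jz: "3/4 \<le> J z \<and> J z \<le> 5/4" if z: "z \<in> ball z0 (2*\<delta>)" for z
  proof -
    have "dist z z0 < d2" using z unfolding \<delta>_def by (auto simp: dist_commute)
    then have "dist (J z) 1 < 1/4" using d2(2) J0 by simp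
    then have "\<bar>J z - 1\<bar> < 1/4" by (simp only: dist_real_def)
    then show ?thesis by arith
  qed
  have onormB: "onorm (D z - D w) \<le> 2*\<eta>" if z: "z \<in> ball z0 (2*\<delta>)" and w: "w \<in> ball z0 (2*\<delta>)" for z w
  proof (rule onorm_le)
    fix h
    have "norm ((D z - D w) h) = norm ((D z h - D z0 h) - (D w h - D z0 h))" by simp
    also have "\<dots> \<le> norm (D z h - D z0 h) + norm (D w h - D z0 h)" by (rule norm_triangle_ineq4)
    also have "\<dots> \<le> \<eta> * norm h + \<eta> * norm h" using Dz[OF z] Dz[OF w] by (rule add_mono)
    finally show "norm ((D z - D w) h) \<le> 2*\<eta> * norm h" by simp
  qed
  have lip: "norm (\<psi> v - \<psi> w) \<le> (1 + \<kappa>) * norm (v - w)"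
    if w: "w \<in> ball z0 \<delta>" and v: "v \<in> ball w \<delta>" for v w
  proof -
    have seg: "w + \<tau> *\<^sub>R (v - w) \<in> ball z0 (2*\<delta>)" if "\<tau> \<in> {0..1}" for \<tau>
    proof -
      have "dist z0 (w + \<tau> *\<^sub>R (v - w)) \<le> dist z0 w + norm (\<tau> *\<^sub>R (v - w))"
        by (metis dist_norm dist_triangle2 add_diff_cancel_left' norm_minus_commute)
      also have "norm (\<tau> *\<^sub>R (v - w)) \<le> norm (v - w)" using that by (auto intro: mult_left_le_one_le)
      finally show ?thesis using w v by (auto simp: dist_norm norm_minus_commute)
    qed
    have wS: "w \<in> ball z0 (2*\<delta>)" using w \<delta>0 by auto
    have "norm (\<psi> v - \<psi> w - D w (v - w)) \<le> norm (v - w) * (2*\<eta>)"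
    proof (rule differentiable_bound_linearization[where S="ball z0 (2*\<delta>)" and f'=D])
      show "\<And>t. t \<in> {0..1} \<Longrightarrow> w + t *\<^sub>R (v - w) \<in> ball z0 (2*\<delta>)" by (rule seg)
      show "(\<psi> has_derivative D x) (at x within ball z0 (2 * \<delta>))" if "x \<in> ball z0 (2*\<delta>)" for x
      proof -
        have "x \<in> V" using that ball2 by auto
        then show ?thesis using dif[of x] by (simp add: has_derivative_at_withinI)
      qed
      show "onorm (D x - D w) \<le> 2*\<eta>" if "x \<in> ball z0 (2*\<delta>)" for x by (rule onormB[OF that wS])
    qed (rule wS)
    moreover have "norm (D w (v - w)) \<le> (1 + \<eta>) * norm (v - w)"
    proof -
      have "norm (D w (v - w)) \<le> norm (D z0 (v - w)) + norm (D w (v - w) - D z0 (v - w))"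
        by (rule norm_triangle_sub)
      also have "\<dots> \<le> norm (v - w) + \<eta> * norm (v - w)"
        using Dz[OF wS, of "v - w"] iso unfolding D_def by simp
      finally show ?thesis by (simp add: algebra_simps)
    qed
    ultimately have "norm (\<psi> v - \<psi> w) \<le> (1 + 3*\<eta>) * norm (v - w)"
      using norm_triangle_ineq[of "\<psi> v - \<psi> w - D w (v - w)" "D w (v - w)"] by (simp add: algebra_simps)
    then show ?thesis unfolding \<eta>_def by simp
  qed
  have ballV: "ball z0 \<delta> \<subseteq> V" using ball2 \<delta>0 by auto
  obtain W where oW: "open W" and eqW: "\<psi> ` ball z0 \<delta> = M \<inter> W"
    using chart_image[OF lp open_ball ballV] by blast
  have z0W: "\<psi> z0 \<in> W" using eqW \<delta>0 by (metis IntE centre_in_ball imageI)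
  have lbball: "emeasure lborel (ball c r) = ennreal (r ^ m * \<alpha>)" if "0 \<le> r" for c :: "real^'m" and r
  proof -
    have "emeasure lborel (ball c r) = ennreal (measure lborel (ball c r))"
      using emeasure_lborel_ball_finite[of c r] by (simp add: emeasure_eq_ennreal_measure)
    also have "measure lborel (ball c r) = r ^ m * \<alpha>"
      using content_ball_conv_unit_ball[OF that, of c] unfolding \<alpha>_def unit_ball_volume_def m_def by simp
    finally show ?thesis .
  qed
  have fin: "emeasure Vol (M \<inter> W) < \<infinity>"
  proof -
    have "emeasure Vol (M \<inter> W) = (\<integral>\<^sup>+ x. indicator (ball z0 \<delta>) x * ennreal (J x) \<partial>lborel)"
      unfolding eqW[symmetric] J_def by (rule chart_measure[OF Vol lp open_ball ballV])
    also have "\<dots> \<le> (\<integral>\<^sup>+ x. ennreal (5/4) * indicator (ball z0 \<delta>) x \<partial>lborel)"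
    proof (intro nn_integral_mono)
      fix x show "indicator (ball z0 \<delta>) x * ennreal (J x) \<le> ennreal (5/4) * indicator (ball z0 \<delta>) x"
        using Jz[of x] \<delta>0 by (cases "x \<in> ball z0 \<delta>") (auto simp: ennreal_leI)
    qed
    also have "\<dots> = ennreal (5/4) * emeasure lborel (ball z0 \<delta>)"
      by (rule nn_integral_cmult_indicator) simp
    also have "\<dots> < \<infinity>" using emeasure_lborel_ball_finite[of z0 \<delta>]
      by (simp add: ennreal_mult_less_top)
    finally show ?thesis .
  qed
  have lower: "ennreal (\<alpha> / 2 * \<rho> ^ m) \<le> emeasure Vol (M \<inter> cball x \<rho>)"
    if x: "x \<in> M \<inter> W" and \<rho>: "0 < \<rho>" "\<rho> \<le> \<delta>" for x \<rho>
  proof -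
    obtain w where w: "w \<in> ball z0 \<delta>" and xw: "x = \<psi> w" using x eqW by (metis imageE)
    define t where "t = (1 - \<kappa>) * \<rho>"
    have kr: "0 < \<kappa> * \<rho>" using \<kappa>0 \<rho> by simp
    have t0: "0 < t" "t \<le> \<delta>"
    proof -
      show "0 < t" unfolding t_def using \<kappa>0 \<rho> by (intro mult_pos_pos) auto
      show "t \<le> \<delta>" unfolding t_def using kr \<rho> by (simp add: algebra_simps)
    qed
    have tball: "ball w t \<subseteq> ball z0 (2*\<delta>)"
    proof
      fix y assume "y \<in> ball w t"
      then have "dist w y < t" by simp
      moreover have "dist z0 w < \<delta>" using w by simp
      moreover have "dist z0 y \<le> dist z0 w + dist w y" by (rule dist_triangle)
      ultimately show "y \<in> ball z0 (2*\<delta>)" using t0 by simp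
    qed
    then have tV: "ball w t \<subseteq> V" using ball2 by auto
    have sub: "\<psi> ` ball w t \<subseteq> M \<inter> cball x \<rho>"
    proof
      fix y assume "y \<in> \<psi> ` ball w t"
      then obtain v where v: "v \<in> ball w t" and y: "y = \<psi> v" by auto
      have "y \<in> M" using hom v tV y unfolding homeomorphism_def by auto
      moreover have "dist x y \<le> \<rho>"
      proof -
        have vb: "v \<in> ball w \<delta>" using v t0 by auto
        have "dist x y = norm (\<psi> v - \<psi> w)" using xw y by (simp add: dist_norm norm_minus_commute)
        also have "\<dots> \<le> (1 + \<kappa>) * norm (v - w)" by (rule lip[OF w vb])
        also have "\<dots> \<le> (1 + \<kappa>) * t" using v \<kappa>0 by (intro mult_left_mono) (auto simp: dist_norm norm_minus_commute)
        also have "\<dots> = (1 - \<kappa>*\<kappa>) * \<rho>" unfolding t_def by (simp add: algebra_simps)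
        also have "\<dots> \<le> \<rho>" using \<rho> by (simp add: mult_le_cancel_right1)
        finally show ?thesis .
      qed
      ultimately show "y \<in> M \<inter> cball x \<rho>" by simp
    qed
    have "ennreal (\<alpha> / 2 * \<rho> ^ m) \<le> ennreal (3/4) * ennreal (t ^ m * \<alpha>)"
    proof -
      have "1 + real m * (- \<kappa>) \<le> (1 + - \<kappa>) ^ m" using \<kappa>0 by (intro Bernoulli_inequality) simp
      then have b: "3/4 \<le> (1 - \<kappa>) ^ m" using m\<kappa> by simp
      have "\<alpha> / 2 * \<rho> ^ m \<le> 3/4 * ((3/4) * \<rho> ^ m * \<alpha>)" using \<alpha>0 \<rho> by simp
      also have "\<dots> \<le> 3/4 * ((1 - \<kappa>) ^ m * \<rho> ^ m * \<alpha>)"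
        using b \<alpha>0 \<rho> by (intro mult_left_mono mult_right_mono) auto
      also have "\<dots> = 3/4 * (t ^ m * \<alpha>)" unfolding t_def by (simp add: power_mult_distrib)
      finally show ?thesis using t0 \<alpha>0 by (simp add: ennreal_mult[symmetric] ennreal_leI)
    qed
    also have "\<dots> = ennreal (3/4) * emeasure lborel (ball w t)" using lbball t0 by simp
    also have "\<dots> = (\<integral>\<^sup>+ y. ennreal (3/4) * indicator (ball w t) y \<partial>lborel)"
      by (rule nn_integral_cmult_indicator[symmetric]) simp
    also have "\<dots> \<le> (\<integral>\<^sup>+ y. indicator (ball w t) y * ennreal (J y) \<partial>lborel)"
    proof (intro nn_integral_mono)
      fix y show "ennreal (3/4) * indicator (ball w t) y \<le> indicator (ball w t) y * ennreal (J y)"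
        using Jz[of y] tball by (cases "y \<in> ball w t") (auto simp: ennreal_leI)
    qed
    also have "\<dots> = emeasure Vol (\<psi> ` ball w t)"
      unfolding J_def by (rule chart_measure[OF Vol lp open_ball tV, symmetric])
    also have "\<dots> \<le> emeasure Vol (M \<inter> cball x \<rho>)"
      by (rule emeasure_mono[OF sub sets_Vol_closed[OF Vol closed_cball]])
    finally show ?thesis .
  qed
  show ?thesis
    using \<delta>0 oW z0W fin lower unfolding \<alpha>_def m_def by blast
qed



lemma cover:
  fixes M :: "(real^'n) set" and Vol :: "(real^'n) measure"
  assumes M_ne: "M \<noteq> {}" and M_cpt: "compact M"
    and M_mfd: "smooth_submanifold M TYPE('m::finite)"
    and Vol: "is_volume_measure M TYPE('m) Vol"
  shows "\<exists>r>0. emeasure Vol M < \<infinity> \<and> (\<forall>x\<in>M. \<forall>\<rho>. 0 < \<rho> \<and> \<rho> \<le> r \<longrightarrow>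
        ennreal (unit_ball_volume TYPE('m) / 2 * \<rho> ^ CARD('m)) \<le> emeasure Vol (M \<inter> cball x \<rho>))"
proof -
  define P where "P p \<delta> W \<longleftrightarrow> \<delta> > 0 \<and> open W \<and> p \<in> W \<and> emeasure Vol (M \<inter> W) < \<infinity> \<and>
    (\<forall>x\<in>M \<inter> W. \<forall>\<rho>. 0 < \<rho> \<and> \<rho> \<le> \<delta> \<longrightarrow>
        ennreal (unit_ball_volume TYPE('m) / 2 * \<rho> ^ CARD('m)) \<le> emeasure Vol (M \<inter> cball x \<rho>))" for p \<delta> W
  have loc: "\<exists>\<delta> W. P p \<delta> W" if p: "p \<in> M" for p
  proof -
    obtain V :: "(real^'m) set" and \<phi> where lp: "local_param M V \<phi>" and pV: "p \<in> \<phi> ` V"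
      using M_mfd p unfolding smooth_submanifold_def by blast
    obtain v0 where v0: "v0 \<in> V" "p = \<phi> v0" using pV by blast
    obtain V' :: "(real^'m) set" and \<psi> where lp': "local_param M V' \<psi>" and "0 \<in> V'" and "\<psi> 0 = \<phi> v0"
      and iso: "\<forall>h. norm (frechet_derivative \<psi> (at 0) h) = norm h"
      using normalize_chart[OF lp v0(1)] by blast
    then show ?thesis
      using chart_estimate[OF Vol lp' \<open>0 \<in> V'\<close>] iso v0 unfolding P_def by auto
  qed
  then obtain \<delta> W where PW: "\<And>p. p \<in> M \<Longrightarrow> P p (\<delta> p) (W p)" by metis
  have "M \<subseteq> (\<Union>p\<in>M. W p)" using PW unfolding P_def by blast
  then obtain F where F: "F \<subseteq> M" "finite F" "M \<subseteq> (\<Union>p\<in>F. W p)"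
    using compactE_image[OF M_cpt, of M W] PW unfolding P_def by blast
  have Fne: "F \<noteq> {}" using F M_ne by auto
  define r where "r = Min (\<delta> ` F)"
  have r0: "r > 0" unfolding r_def using F Fne PW unfolding P_def by (subst Min_gr_iff) auto
  have rle: "r \<le> \<delta> p" if "p \<in> F" for p unfolding r_def using F that by simp
  have sets: "M \<inter> W p \<in> sets Vol" if "p \<in> F" for p
    using sets_Vol_open[OF Vol] PW F that unfolding P_def by blast
  have U: "(\<Union>p\<in>F. M \<inter> W p) \<in> sets Vol"
    by (rule sets.finite_UN[OF F(2)]) (rule sets)
  have "emeasure Vol M \<le> emeasure Vol (\<Union>p\<in>F. M \<inter> W p)"
    by (rule emeasure_mono[OF _ U]) (use F(3) in auto)
  also have "\<dots> \<le> (\<Sum>p\<in>F. emeasure Vol (M \<inter> W p))"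
    by (rule emeasure_subadditive_finite) (use F(2) sets in auto)
  also have "\<dots> < \<infinity>" using F PW unfolding P_def by (auto simp: ennreal_sum_less_top)
  finally have fin: "emeasure Vol M < \<infinity>" .
  have "ennreal (unit_ball_volume TYPE('m) / 2 * \<rho> ^ CARD('m)) \<le> emeasure Vol (M \<inter> cball x \<rho>)"
    if x: "x \<in> M" and \<rho>: "0 < \<rho>" "\<rho> \<le> r" for x \<rho>
  proof -
    obtain p where p: "p \<in> F" "x \<in> W p" using F x by blast
    have "\<rho> \<le> \<delta> p" using rle[OF p(1)] \<rho> by simp
    then show ?thesis using PW[of p] p F x \<rho> unfolding P_def by blast
  qed
  then show ?thesis using r0 fin by blast
qed

theorem mainTheorem9:
  fixes M :: "(real^'n) set" and Vol :: "(real^'n) measure"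
  assumes Y_fin: "\<exists>B. finite B \<and> span B = (UNIV :: 'y::real_normed_vector set)"
    and M_sub: "M \<subseteq> {x. \<forall>i. 0 \<le> x $ i \<and> x $ i \<le> 1}"
    and M_ne: "M \<noteq> {}"
    and M_cpt: "compact M"
    and M_mfd: "smooth_submanifold M TYPE('m::finite)"
    and Vol: "is_volume_measure M TYPE('m) Vol"
  shows "\<exists>r>0. \<forall>(u :: real^'n \<Rightarrow> 'y) L.
           L-lipschitz_on {x. \<forall>i. 0 \<le> x $ i \<and> x $ i \<le> 1} u \<longrightarrow>
           (let Sinf = (SUP x\<in>M. norm (u x));
                L2sq = (\<integral>x. (norm (u x))\<^sup>2 \<partial>Vol);
                m = CARD('m)
            in (Sinf \<le> L * r \<longrightarrow>
                  Sinf ^ (m + 2) \<le> real ((m + 2) * (m + 1)) / unit_ball_volume TYPE('m) * L ^ m * L2sq)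
             \<and> (Sinf \<ge> L * r \<longrightarrow>
                  Sinf\<^sup>2 \<le> 2 ^ (m + 1) * real (m + 1) / (unit_ball_volume TYPE('m) * r ^ m) * L2sq))"
proof -
  define m where "m = CARD('m)"
  define \<alpha> where "\<alpha> = unit_ball_volume TYPE('m)"
  have m0: "0 < m" unfolding m_def by simp
  have \<alpha>0: "0 < \<alpha>" unfolding \<alpha>_def unit_ball_volume_def using content_ball_pos[of 1 "0::real^'m"] by simp
  obtain r where r0: "r > 0" and fin: "emeasure Vol M < \<infinity>"
    and G: "\<And>x \<rho>. x \<in> M \<Longrightarrow> 0 < \<rho> \<Longrightarrow> \<rho> \<le> r \<Longrightarrow> ennreal (\<alpha> / 2 * \<rho> ^ m) \<le> emeasure Vol (M \<inter> cball x \<rho>)"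
    using cover[OF M_ne M_cpt M_mfd Vol] unfolding \<alpha>_def m_def by blast
  have sp: "space Vol = M" and sets: "sets Vol = sets (restrict_space borel M)"
    using Vol unfolding is_volume_measure_def by auto
  have finM: "finite_measure Vol" using fin sp by (intro finite_measureI) simp
  have G': "\<And>x \<rho>. x \<in> M \<Longrightarrow> 0 < \<rho> \<Longrightarrow> \<rho> \<le> r \<Longrightarrow> ennreal (\<alpha> / 2 * \<rho> ^ m) \<le> emeasure Vol (M \<inter> cball x \<rho>)"
    by (rule G)
  have main: "(Sinf \<le> L * r \<longrightarrow>
                  Sinf ^ (m + 2) \<le> real ((m + 2) * (m + 1)) / \<alpha> * L ^ m * L2sq)
             \<and> (Sinf \<ge> L * r \<longrightarrow>
                  Sinf\<^sup>2 \<le> 2 ^ (m + 1) * real (m + 1) / (\<alpha> * r ^ m) * L2sq)"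
    if lip: "L-lipschitz_on {x. \<forall>i. 0 \<le> x $ i \<and> x $ i \<le> 1} u"
      and Sdef: "Sinf = (SUP x\<in>M. norm (u x))" and Idef: "L2sq = (\<integral>x. (norm (u x))\<^sup>2 \<partial>Vol)"
    for u :: "real^'n \<Rightarrow> 'y" and L Sinf L2sq
  proof -
    have lipM: "L-lipschitz_on M u" using lipschitz_on_subset[OF lip M_sub] .
    have L0: "0 \<le> L" using lip by (rule lipschitz_on_nonneg)
    have contu: "continuous_on M u" using lipM by (rule lipschitz_on_continuous_on)
    obtain x0 where x0: "x0 \<in> M" "\<And>x. x \<in> M \<Longrightarrow> norm (u x) \<le> norm (u x0)"
      using continuous_attains_sup[OF M_cpt M_ne continuous_on_norm[OF contu]] by blast
    have bdd: "bdd_above ((\<lambda>x. norm (u x)) ` M)" using x0(2) by (meson bdd_aboveI2)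
    have "norm (u x0) \<le> Sinf" unfolding Sdef using x0 bdd by (intro cSUP_upper) auto
    then have S0: "0 \<le> Sinf" using norm_ge_zero order_trans by blast
    have I0: "0 \<le> L2sq" unfolding Idef by (intro integral_nonneg_AE) auto
    have core: "Sinf ^ (m+2) \<le> real((m+2)*(m+1)) / \<alpha> * L' ^ m * L2sq"
      if lip': "L'-lipschitz_on M u" and Sp: "0 < Sinf" and SL: "Sinf \<le> L' * r" for L'
    proof -
      have "Sinf ^ (m+2) \<le> real((m+2)*(m+1)) / (2*(\<alpha>/2)) * L' ^ m * L2sq"
        unfolding Sdef Idef
        by (rule stepA[OF finM sp sets M_cpt M_ne _ m0 G' lip'])
           (use \<alpha>0 Sp SL Sdef in auto)
      then show ?thesis by simp
    qed
    have part1: "Sinf ^ (m + 2) \<le> real ((m + 2) * (m + 1)) / \<alpha> * L ^ m * L2sq" if SL: "Sinf \<le> L * r"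
    proof (cases "Sinf = 0")
      case True
      then show ?thesis using \<alpha>0 L0 I0 by simp
    next
      case False
      then show ?thesis using core[OF lipM _ SL] S0 by simp
    qed
    have part2: "Sinf\<^sup>2 \<le> 2 ^ (m + 1) * real (m + 1) / (\<alpha> * r ^ m) * L2sq" if SL: "Sinf \<ge> L * r"
    proof (cases "Sinf = 0")
      case True
      then show ?thesis using \<alpha>0 r0 I0 by simp
    next
      case False
      then have Sp: "0 < Sinf" using S0 by simp
      define L' where "L' = Sinf / r"
      have LL': "L \<le> L'" unfolding L'_def using SL r0 by (simp add: field_simps)
      have lip': "L'-lipschitz_on M u" using lipschitz_on_le[OF lipM LL'] .
      have SL': "Sinf \<le> L' * r" unfolding L'_def using r0 by simp
      define K where "K = real((m+2)*(m+1)) / \<alpha>"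
      have K0: "0 \<le> K" unfolding K_def using \<alpha>0 by simp
      have h: "Sinf ^ (m+2) \<le> K * L' ^ m * L2sq" using core[OF lip' Sp SL'] unfolding K_def .
      have "Sinf\<^sup>2 * Sinf ^ m = Sinf ^ (m+2)" by (simp add: power_add[symmetric] add.commute)
      also have "\<dots> \<le> K * L' ^ m * L2sq" by (rule h)
      also have "\<dots> = (K * L2sq / r ^ m) * Sinf ^ m" unfolding L'_def by (simp add: power_divide)
      finally have "Sinf\<^sup>2 * Sinf ^ m \<le> (K * L2sq / r ^ m) * Sinf ^ m" .
      then have s1: "Sinf\<^sup>2 \<le> K * L2sq / r ^ m" by (rule mult_right_le_imp_le) (use Sp in simp)
      have nat: "(m+2)*(m+1) \<le> 2^(m+1)*(m+1)"
      proof -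
        have "m + 1 < 2^(m+1)" by (rule less_exp)
        then have "m + 2 \<le> 2^(m+1)" by simp
        then show ?thesis by (rule mult_right_mono) simp
      qed
      have "real((m+2)*(m+1)) \<le> 2^(m+1) * real(m+1)"
        using nat by (metis of_nat_le_iff of_nat_mult of_nat_numeral of_nat_power)
      then have "K \<le> 2^(m+1) * real(m+1) / \<alpha>" unfolding K_def using \<alpha>0 by (simp add: divide_right_mono)
      then have "K * L2sq / r ^ m \<le> (2^(m+1) * real(m+1) / \<alpha>) * L2sq / r ^ m"
        using I0 r0 by (intro divide_right_mono mult_right_mono) auto
      also have "\<dots> = 2 ^ (m + 1) * real (m + 1) / (\<alpha> * r ^ m) * L2sq" by simp
      finally show ?thesis using s1 by linarith
    qed
    show ?thesis using part1 part2 by blast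
  qed
  show ?thesis
    apply (rule exI[of _ r])
    apply (intro conjI r0 allI impI)
    apply (unfold Let_def)
    apply (fold m_def \<alpha>_def)
    apply (rule main)
      apply assumption
     apply (rule refl)
    apply (rule refl)
    done
qed


end
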